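(* Let $k\ge 2$ and $m\ge 5$ be integers and let $G$ be the complete $k$-partite graph $K(m,2,\ldots,2)$ (one part of size $m$ and $k-1$ parts of size $2$). Then $h(G)=ch(G)\ge k+1$.
   Context: All graphs are finite and simple. A list assignment $L$ to a graph $G$ assigns a finite set $L(v)$ to each vertex $v$; a proper $L$-coloring is a map $\psi$ with $\psi(v)\in L(v)$ for all $v$ and $\psi(u)\ne\psi(v)$ for every edge $uv$. The choice number $ch(G)$ is the least $k$ such that $G$ is properly $L$-colorable whenever $|L(v)|\ge k$ for all $v$. For a subgraph $H$ of $G$ and a color $\sigma$, let $H_\sigma$ denote the subgraph of $H$ induced by $\{v\in V(H):\sigma\in L(v)\}$, and let $\alpha$ denote the independence number (with $\alpha$ of the null graph equal to $0$). $G$ and $L$ satisfy Hall's condition if $\sum_{\sigma}\alpha(H_\sigma)\ge |V(H)|$ for every subgraph $H$ of $G$, the sum being over all colors. The Hall number $h(G)$ is the smallest positive integer $k$ such that $G$ has a proper $L$-coloring whenever $G$ and $L$ satisfy Hall's condition and $|L(v)|\ge k$ for every $v\in V(G)$. *)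

theory Defs
  imports Main
begin

text \<open>A finite simple graph is given by a vertex set V and an edge relation E
  (symmetric, irreflexive on V). Colours are natural numbers.\<close>

definition independent :: "('a \<Rightarrow> 'a \<Rightarrow> bool) \<Rightarrow> 'a set \<Rightarrow> bool" where
  "independent E S \<longleftrightarrow> (\<forall>u\<in>S. \<forall>v\<in>S. \<not> E u v)"

definition alpha :: "'a set \<Rightarrow> ('a \<Rightarrow> 'a \<Rightarrow> bool) \<Rightarrow> nat" where
  "alpha W E = Max {card S | S. S \<subseteq> W \<and> independent E S}"

definition proper_L_coloring ::
  "'a set \<Rightarrow> ('a \<Rightarrow> 'a \<Rightarrow> bool) \<Rightarrow> ('a \<Rightarrow> nat set) \<Rightarrow> ('a \<Rightarrow> nat) \<Rightarrow> bool" where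
  "proper_L_coloring V E L \<psi> \<longleftrightarrow>
     (\<forall>v\<in>V. \<psi> v \<in> L v) \<and> (\<forall>u\<in>V. \<forall>v\<in>V. E u v \<longrightarrow> \<psi> u \<noteq> \<psi> v)"

definition L_colorable :: "'a set \<Rightarrow> ('a \<Rightarrow> 'a \<Rightarrow> bool) \<Rightarrow> ('a \<Rightarrow> nat set) \<Rightarrow> bool" where
  "L_colorable V E L \<longleftrightarrow> (\<exists>\<psi>. proper_L_coloring V E L \<psi>)"

definition is_subgraph ::
  "'a set \<Rightarrow> ('a \<Rightarrow> 'a \<Rightarrow> bool) \<Rightarrow> 'a set \<Rightarrow> ('a \<Rightarrow> 'a \<Rightarrow> bool) \<Rightarrow> bool" where
  "is_subgraph W F V E \<longleftrightarrow> W \<subseteq> V \<and> (\<forall>u v. F u v \<longrightarrow> E u v \<and> u \<in> W \<and> v \<in> W)"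

text \<open>Hall's condition: for every subgraph H = (W,F),
  sum over colours sigma of alpha(H_sigma) >= |W|. Colours not in any list of W
  contribute 0, so the sum is taken over the colours appearing on W.\<close>
definition hall_condition :: "'a set \<Rightarrow> ('a \<Rightarrow> 'a \<Rightarrow> bool) \<Rightarrow> ('a \<Rightarrow> nat set) \<Rightarrow> bool" where
  "hall_condition V E L \<longleftrightarrow>
     (\<forall>W F. is_subgraph W F V E \<longrightarrow>
        (\<Sum>\<sigma>\<in>(\<Union>v\<in>W. L v). alpha {v\<in>W. \<sigma> \<in> L v} F) \<ge> card W)"

definition list_assignment_min :: "'a set \<Rightarrow> ('a \<Rightarrow> nat set) \<Rightarrow> nat \<Rightarrow> bool" where
  "list_assignment_min V L k \<longleftrightarrow> (\<forall>v\<in>V. finite (L v) \<and> card (L v) \<ge> k)"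

definition choice_number :: "'a set \<Rightarrow> ('a \<Rightarrow> 'a \<Rightarrow> bool) \<Rightarrow> nat" where
  "choice_number V E = (LEAST k. \<forall>L. list_assignment_min V L k \<longrightarrow> L_colorable V E L)"

definition hall_number :: "'a set \<Rightarrow> ('a \<Rightarrow> 'a \<Rightarrow> bool) \<Rightarrow> nat" where
  "hall_number V E = (LEAST k. 0 < k \<and>
     (\<forall>L. list_assignment_min V L k \<and> hall_condition V E L \<longrightarrow> L_colorable V E L))"

text \<open>Complete k-partite graph K(m,2,...,2): vertices (i,j) with part index i < k,
  part 0 of size m, parts 1..k-1 of size 2; adjacency iff in different parts.\<close>
definition Kpart_V :: "nat \<Rightarrow> nat \<Rightarrow> (nat \<times> nat) set" where
  "Kpart_V m k = {(i, j). i < k \<and> j < (if i = 0 then m else 2)}"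

definition Kpart_E :: "nat \<times> nat \<Rightarrow> nat \<times> nat \<Rightarrow> bool" where
  "Kpart_E u v \<longleftrightarrow> fst u \<noteq> fst v"

end

theory Submission
  imports Defs
begin

definition Dset :: "nat \<Rightarrow> nat \<Rightarrow> nat \<Rightarrow> nat \<Rightarrow> nat \<Rightarrow> nat set" where
  "Dset k a1 a2 c1 c2 = {0..<2*k} - {a1..<a2} - {k+c1..<k+c2}"

definition Tl :: "nat \<Rightarrow> nat \<Rightarrow> nat set" where
  "Tl k j = (if j = 0 then Dset k 0 (k - k div 2) 0 (k div 2)
     else if j = 1 then Dset k 0 (k div 2) (k div 2) k
     else if j = 2 then Dset k (k div 2) k (k - k div 2) k
     else if j = 3 then Dset k (k - k div 2) k 0 (k - k div 2)
     else if j = 4 then Dset k (k div 2) (k - k div 2) (k div 2) (k - k div 2)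
     else {0..<k})"

definition badL :: "nat \<Rightarrow> nat \<times> nat \<Rightarrow> nat set" where
  "badL k v = (if fst v = 0 then Tl k (snd v) else if snd v = 0 then {0..<k} else {k..<2*k})"

lemma Dset_card:
  assumes "a1 \<le> a2" "a2 \<le> k" "c1 \<le> c2" "c2 \<le> k" "(a2-a1)+(c2-c1) \<le> k"
  shows "k \<le> card (Dset k a1 a2 c1 c2)"
proof -
  have eq: "Dset k a1 a2 c1 c2 = {0..<2*k} - ({a1..<a2} \<union> {k+c1..<k+c2})"
    unfolding Dset_def by auto
  have sub: "{a1..<a2} \<union> {k+c1..<k+c2} \<subseteq> {0..<2*k}" using assms by auto
  have disj: "{a1..<a2} \<inter> {k+c1..<k+c2} = {}" using assms by auto
  have "card ({a1..<a2} \<union> {k+c1..<k+c2}) = (a2-a1)+(c2-c1)"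
    using disj by (simp add: card_Un_disjoint)
  then show ?thesis unfolding eq using card_Diff_subset[OF _ sub] assms by simp
qed

lemma Tl_card: "k \<ge> 2 \<Longrightarrow> k \<le> card (Tl k j)"
  unfolding Tl_def by (auto intro!: Dset_card)

lemma Tl_sub: "Tl k j \<subseteq> {0..<2*k}"
  unfolding Tl_def Dset_def by auto

lemma Tl_cover:
  assumes "a < k" "b < k"
  shows "\<exists>j<5. a \<notin> Tl k j \<and> k + b \<notin> Tl k j"
proof -
  define p where "p = k div 2"
  have pq: "p \<le> k - p" "k - p \<le> p + 1" unfolding p_def by auto
  show ?thesis
  proof (cases "a < p")
    case True
    then show ?thesis
    proof (cases "b < p")
      case True
      then show ?thesis using \<open>a < p\<close> pq assms
        by (intro exI[of _ 0]) (auto simp: Tl_def Dset_def p_def; arith)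
    next
      case False
      then show ?thesis using \<open>a < p\<close> pq assms
        by (intro exI[of _ 1]) (auto simp: Tl_def Dset_def p_def; arith)
    qed
  next
    case False
    show ?thesis
    proof (cases "b \<ge> k - p")
      case True
      then show ?thesis using False pq assms
        by (intro exI[of _ 2]) (auto simp: Tl_def Dset_def p_def; arith)
    next
      case nb: False
      show ?thesis
      proof (cases "a \<ge> k - p")
        case True
        then show ?thesis using False nb pq assms
          by (intro exI[of _ 3]) (auto simp: Tl_def Dset_def p_def; arith)
      next
        case na: False
        show ?thesis
        proof (cases "b < p")
          case True
          then show ?thesis using False na nb pq assms
            by (intro exI[of _ 0]) (auto simp: Tl_def Dset_def p_def; arith)
        next
          case nb2: False
          then show ?thesis using False na nb pq assms
            by (intro exI[of _ 4]) (auto simp: Tl_def Dset_def p_def; arith)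
        qed
      qed
    qed
  qed
qed


lemma badL_min:
  assumes "k \<ge> 2"
  shows "list_assignment_min (Kpart_V m k) (badL k) k"
proof -
  have f: "finite (Tl k j)" for j using finite_subset[OF Tl_sub] by blast
  show ?thesis unfolding list_assignment_min_def badL_def
    using Tl_card[OF assms] f by simp
qed

lemma pick_missing:
  fixes f :: "nat \<Rightarrow> nat"
  assumes inj: "inj_on f {1..<k}" and sub: "f ` {1..<k} \<subseteq> {c..<c+k}" and k: "k \<ge> 1"
  obtains a where "a \<in> {c..<c+k}" "{c..<c+k} - {a} \<subseteq> f ` {1..<k}"
proof -
  have "card (f ` {1..<k}) = k - 1" using card_image[OF inj] by simp
  then have "card ({c..<c+k} - f ` {1..<k}) = 1"
    using card_Diff_subset[OF _ sub] k by simp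
  then obtain a where a: "{c..<c+k} - f ` {1..<k} = {a}" by (meson card_1_singletonE)
  then show ?thesis using that[of a] by blast
qed

lemma badL_not_col:
  assumes k: "k \<ge> 2" and m: "m \<ge> 5"
  shows "\<not> L_colorable (Kpart_V m k) Kpart_E (badL k)"
proof
  assume "L_colorable (Kpart_V m k) Kpart_E (badL k)"
  then obtain \<psi> where pr: "proper_L_coloring (Kpart_V m k) Kpart_E (badL k) \<psi>"
    unfolding L_colorable_def by blast
  have inL: "\<And>v. v \<in> Kpart_V m k \<Longrightarrow> \<psi> v \<in> badL k v" using pr unfolding proper_L_coloring_def by blast
  have adj: "\<And>u v. u \<in> Kpart_V m k \<Longrightarrow> v \<in> Kpart_V m k \<Longrightarrow> fst u \<noteq> fst v \<Longrightarrow> \<psi> u \<noteq> \<psi> v"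
    using pr unfolding proper_L_coloring_def Kpart_E_def by blast
  define fx where "fx = (\<lambda>i. \<psi> (i, 0::nat))"
  define fy where "fy = (\<lambda>i. \<psi> (i, 1::nat))"
  have Vx: "\<And>i. i \<in> {1..<k} \<Longrightarrow> (i, 0) \<in> Kpart_V m k" unfolding Kpart_V_def by auto
  have Vy: "\<And>i. i \<in> {1..<k} \<Longrightarrow> (i, 1) \<in> Kpart_V m k" unfolding Kpart_V_def by auto
  have injx: "inj_on fx {1..<k}"
  proof (rule inj_onI)
    fix x y assume "x \<in> {1..<k}" "y \<in> {1..<k}" "fx x = fx y"
    then show "x = y" using adj[OF Vx Vx, of x y] unfolding fx_def by fastforce
  qed
  have injy: "inj_on fy {1..<k}"
  proof (rule inj_onI)
    fix x y assume "x \<in> {1..<k}" "y \<in> {1..<k}" "fy x = fy y"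
    then show "x = y" using adj[OF Vy Vy, of x y] unfolding fy_def by fastforce
  qed
  have subx: "fx ` {1..<k} \<subseteq> {0..<0+k}"
  proof
    fix c assume "c \<in> fx ` {1..<k}"
    then obtain i where i: "i \<in> {1..<k}" "c = \<psi> (i, 0)" unfolding fx_def by auto
    show "c \<in> {0..<0+k}" using inL[OF Vx[OF i(1)]] i by (simp add: badL_def)
  qed
  have suby: "fy ` {1..<k} \<subseteq> {k..<k+k}"
  proof
    fix c assume "c \<in> fy ` {1..<k}"
    then obtain i where i: "i \<in> {1..<k}" "c = \<psi> (i, 1)" unfolding fy_def by auto
    show "c \<in> {k..<k+k}" using inL[OF Vy[OF i(1)]] i by (simp add: badL_def)
  qed
  obtain a where a: "a \<in> {0..<0+k}" "{0..<0+k} - {a} \<subseteq> fx ` {1..<k}"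
    using pick_missing[OF injx subx] k by auto
  obtain b' where b': "b' \<in> {k..<k+k}" "{k..<k+k} - {b'} \<subseteq> fy ` {1..<k}"
    using pick_missing[OF injy suby] k by auto
  define b where "b = b' - k"
  have bk: "b < k" "b' = k + b" using b' unfolding b_def by auto
  obtain j where j: "j < 5" "a \<notin> Tl k j" "k + b \<notin> Tl k j" using Tl_cover[of a k b] a bk by auto
  have v: "(0, j) \<in> Kpart_V m k" using j m k unfolding Kpart_V_def by auto
  have c: "\<psi> (0, j) \<in> Tl k j" using inL[OF v] by (simp add: badL_def)
  then have c2: "\<psi> (0, j) < 2 * k" using Tl_sub[of k j] by auto
  show False
  proof (cases "\<psi> (0, j) < k")
    case True
    then have "\<psi> (0, j) \<in> {0..<0+k} - {a}" using c j by auto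
    then obtain i where i: "i \<in> {1..<k}" "\<psi> (0, j) = \<psi> (i, 0)" using a unfolding fx_def by auto
    then show False using adj[OF v Vx[OF i(1)]] by auto
  next
    case False
    then have "\<psi> (0, j) \<in> {k..<k+k} - {b'}" using c c2 j bk by auto
    then obtain i where i: "i \<in> {1..<k}" "\<psi> (0, j) = \<psi> (i, 1)" using b' unfolding fy_def by auto
    then show False using adj[OF v Vy[OF i(1)]] by auto
  qed
qed


lemma finite_KV: "finite (Kpart_V m k)"
proof -
  have "Kpart_V m k \<subseteq> {0..<k} \<times> {0..<max m 2}" unfolding Kpart_V_def by (auto split: if_splits)
  then show ?thesis by (rule finite_subset) auto
qed

lemma inj_choice:
  "finite W \<Longrightarrow> (\<forall>v\<in>W. finite (L v) \<and> card (L v) \<ge> card W) \<Longrightarrow>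
     \<exists>\<psi>::_\<Rightarrow>nat. (\<forall>v\<in>W. \<psi> v \<in> L v) \<and> inj_on \<psi> W"
proof (induction W rule: finite_induct)
  case empty
  then show ?case by auto
next
  case (insert x F)
  then have "\<forall>v\<in>F. finite (L v) \<and> card (L v) \<ge> card F" by auto
  then obtain \<psi> where p: "\<forall>v\<in>F. \<psi> v \<in> L v" "inj_on \<psi> F" using insert.IH by blast
  have "card (\<psi> ` F) < card (L x)"
    using insert card_image_le[of F \<psi>] by auto
  then have "\<not> L x \<subseteq> \<psi> ` F" using insert by (meson card_mono finite_imageI not_le)
  then obtain c where c: "c \<in> L x" "c \<notin> \<psi> ` F" by blast
  show ?case
    apply (rule exI[of _ "\<psi>(x := c)"])
    using p c insert.hyps by (auto simp: inj_on_def)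
qed

lemma big_colorable:
  assumes "list_assignment_min (Kpart_V m k) L (card (Kpart_V m k))"
  shows "L_colorable (Kpart_V m k) Kpart_E L"
proof -
  obtain \<psi> where p: "\<forall>v\<in>Kpart_V m k. \<psi> v \<in> L v" "inj_on \<psi> (Kpart_V m k)"
    using inj_choice[OF finite_KV] assms unfolding list_assignment_min_def by blast
  then have "proper_L_coloring (Kpart_V m k) Kpart_E L \<psi>"
    unfolding proper_L_coloring_def Kpart_E_def inj_on_def by auto
  then show ?thesis unfolding L_colorable_def by blast
qed

lemma lam_mono: "list_assignment_min V L s \<Longrightarrow> t \<le> s \<Longrightarrow> list_assignment_min V L t"
  unfolding list_assignment_min_def by auto

lemma alpha_ge:
  assumes "finite A" "S \<subseteq> A" "independent F S"
  shows "card S \<le> alpha A F"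
proof -
  have fin: "finite {card S | S. S \<subseteq> A \<and> independent F S}"
    by (rule finite_subset[of _ "card ` Pow A"]) (auto simp: assms)
  show ?thesis unfolding alpha_def by (rule Max_ge[OF fin]) (use assms in blast)
qed

lemma hall_ok:
  assumes L: "list_assignment_min (Kpart_V m k) L s" and sk: "s \<ge> k" and k: "k \<ge> 1"
  shows "hall_condition (Kpart_V m k) Kpart_E L"
  unfolding hall_condition_def
proof (intro allI impI)
  fix W F assume sg: "is_subgraph W F (Kpart_V m k) Kpart_E"
  have WV: "W \<subseteq> Kpart_V m k" using sg unfolding is_subgraph_def by blast
  have Fi: "\<And>u v. F u v \<Longrightarrow> fst u \<noteq> fst v" using sg unfolding is_subgraph_def Kpart_E_def by blast
  have finW: "finite W" using finite_subset[OF WV finite_KV] .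
  have finL: "\<And>v. v \<in> W \<Longrightarrow> finite (L v)" using L WV unfolding list_assignment_min_def by auto
  have cardL: "\<And>v. v \<in> W \<Longrightarrow> card (L v) \<ge> s" using L WV unfolding list_assignment_min_def by auto
  have fstk: "\<And>v. v \<in> W \<Longrightarrow> fst v < k" using WV unfolding Kpart_V_def by auto
  define C where "C = (\<Union>v\<in>W. L v)"
  have finC: "finite C" unfolding C_def using finW finL by auto
  define Ws where "Ws = (\<lambda>\<sigma>. {v\<in>W. \<sigma> \<in> L v})"
  have one: "card (Ws \<sigma>) \<le> k * alpha (Ws \<sigma>) F" for \<sigma>
  proof -
    have "Ws \<sigma> = (\<Union>i\<in>{0..<k}. {v\<in>Ws \<sigma>. fst v = i})" unfolding Ws_def using fstk by auto
    then have "card (Ws \<sigma>) \<le> (\<Sum>i\<in>{0..<k}. card {v\<in>Ws \<sigma>. fst v = i})"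
      using card_UN_le[of "{0..<k}" "\<lambda>i. {v\<in>Ws \<sigma>. fst v = i}"] by simp
    also have "\<dots> \<le> (\<Sum>i\<in>{0..<k}. alpha (Ws \<sigma>) F)"
    proof (rule sum_mono)
      fix i
      have "finite (Ws \<sigma>)" unfolding Ws_def using finW by auto
      moreover have "independent F {v\<in>Ws \<sigma>. fst v = i}" unfolding independent_def using Fi by blast
      ultimately show "card {v\<in>Ws \<sigma>. fst v = i} \<le> alpha (Ws \<sigma>) F"
        by (intro alpha_ge) auto
    qed
    also have "\<dots> = k * alpha (Ws \<sigma>) F" by simp
    finally show ?thesis .
  qed
  have swap: "(\<Sum>\<sigma>\<in>C. card (Ws \<sigma>)) = (\<Sum>v\<in>W. card (L v))"
  proof -
    have "(\<Sum>\<sigma>\<in>C. card (Ws \<sigma>)) = (\<Sum>\<sigma>\<in>C. \<Sum>v\<in>W. if \<sigma> \<in> L v then 1 else 0)"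
      unfolding Ws_def
    proof (rule sum.cong[OF refl])
      fix \<sigma> show "card {v \<in> W. \<sigma> \<in> L v} = (\<Sum>v\<in>W. if \<sigma> \<in> L v then 1 else 0)"
        using sum.inter_filter[OF finW, of "\<lambda>_. 1::nat" "\<lambda>v. \<sigma> \<in> L v"] by simp
    qed
    also have "\<dots> = (\<Sum>v\<in>W. \<Sum>\<sigma>\<in>C. if \<sigma> \<in> L v then 1 else 0)" by (rule sum.swap)
    also have "\<dots> = (\<Sum>v\<in>W. card (L v))"
    proof (rule sum.cong[OF refl])
      fix v assume v: "v \<in> W"
      have "L v \<subseteq> C" unfolding C_def using v by auto
      then have "{\<sigma>\<in>C. \<sigma> \<in> L v} = L v" by auto
      then show "(\<Sum>\<sigma>\<in>C. if \<sigma> \<in> L v then 1 else 0) = card (L v)"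
        using sum.inter_filter[OF finC, of "\<lambda>_. 1::nat" "\<lambda>\<sigma>. \<sigma> \<in> L v"] by simp
    qed
    finally show ?thesis .
  qed
  have "k * card W \<le> (\<Sum>v\<in>W. card (L v))"
  proof -
    have "k * card W = (\<Sum>v\<in>W. k)" by simp
    also have "\<dots> \<le> (\<Sum>v\<in>W. card (L v))" using cardL sk by (intro sum_mono) (meson le_trans)
    finally show ?thesis .
  qed
  also have "\<dots> = (\<Sum>\<sigma>\<in>C. card (Ws \<sigma>))" using swap by simp
  also have "\<dots> \<le> (\<Sum>\<sigma>\<in>C. k * alpha (Ws \<sigma>) F)" by (intro sum_mono one)
  also have "\<dots> = k * (\<Sum>\<sigma>\<in>C. alpha (Ws \<sigma>) F)" by (simp add: sum_distrib_left)
  finally have "card W \<le> (\<Sum>\<sigma>\<in>C. alpha (Ws \<sigma>) F)" using k by simp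
  then show "card W \<le> (\<Sum>\<sigma>\<in>(\<Union>v\<in>W. L v). alpha {v\<in>W. \<sigma> \<in> L v} F)"
    unfolding C_def Ws_def .
qed


theorem corollaryD:
  fixes k m :: nat
  assumes "k \<ge> 2" and "m \<ge> 5"
  shows "hall_number (Kpart_V m k) Kpart_E = choice_number (Kpart_V m k) Kpart_E
         \<and> choice_number (Kpart_V m k) Kpart_E \<ge> k + 1"
proof -
  define V where "V = Kpart_V m k"
  define P where "P = (\<lambda>s. \<forall>L. list_assignment_min V L s \<longrightarrow> L_colorable V Kpart_E L)"
  have Pmono: "P s \<Longrightarrow> s \<le> t \<Longrightarrow> P t" for s t
    unfolding P_def using lam_mono by blast
  have Pbig: "P (card V)" unfolding P_def V_def using big_colorable by blast
  have notPk: "\<not> P k" unfolding P_def V_def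
    using badL_min[OF assms(1)] badL_not_col[OF assms] by blast
  have ch: "choice_number V Kpart_E = (LEAST s. P s)" unfolding choice_number_def P_def by simp
  define c where "c = (LEAST s. P s)"
  have Pc: "P c" unfolding c_def using Pbig by (rule LeastI)
  have ck: "c \<ge> k + 1"
  proof (rule ccontr)
    assume "\<not> c \<ge> k + 1"
    then have "c \<le> k" by simp
    then show False using Pmono[OF Pc] notPk by blast
  qed
  have notPc1: "\<not> P (c - 1)" unfolding c_def
    by (rule not_less_Least) (use ck c_def in simp)
  then obtain L0 where L0: "list_assignment_min V L0 (c - 1)" "\<not> L_colorable V Kpart_E L0"
    unfolding P_def by blast
  have hall0: "hall_condition V Kpart_E L0"
    unfolding V_def by (rule hall_ok[of m k L0 "c - 1"]) (use L0 ck assms in \<open>auto simp: V_def\<close>)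
  have "hall_number V Kpart_E = c"
    unfolding hall_number_def
  proof (rule Least_equality)
    show "0 < c \<and> (\<forall>L. list_assignment_min V L c \<and> hall_condition V Kpart_E L \<longrightarrow> L_colorable V Kpart_E L)"
      using Pc ck unfolding P_def by auto
  next
    fix y assume y: "0 < y \<and> (\<forall>L. list_assignment_min V L y \<and> hall_condition V Kpart_E L \<longrightarrow> L_colorable V Kpart_E L)"
    show "c \<le> y"
    proof (rule ccontr)
      assume "\<not> c \<le> y"
      then have "y \<le> c - 1" by simp
      then have "list_assignment_min V L0 y" using lam_mono[OF L0(1)] by blast
      then show False using y hall0 L0(2) by blast
    qed
  qed
  then show ?thesis using ch ck unfolding V_def c_def by simp
qed

end
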